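(* Suppose there exist $i, d \ge 2$ with $i \le d$ such that $o(\alpha_d) + a_i \ge c_R$ and $o(\alpha_d) < \infty$. Then $R = k[[\widetilde{x}_1, \ldots, \widetilde{x}_n]]$ where $\widetilde{x}_j = x_j$ for $j \ne d$ and $\widetilde{x}_d = t^{a_d}$, and $\widetilde{x}_1,\ldots,\widetilde{x}_n$ are again Herzog–Kunz generators of $R$.
   Context: Let $k$ be an algebraically closed field of characteristic $0$ and let $(R,\mathfrak m)$ be a complete local noetherian domain of dimension $1$ containing $k$ with $R/\mathfrak m = k$; its normalization is $\overline R = k[[t]]$, $R \subseteq k[[t]]$ finite birational. Let $v$ be the $t$-adic valuation; for $A \subseteq k((t))$ let $v(A) = \{v(f): f\in A\setminus\{0\}\}$. The conductor is $\mathfrak C_R = \{x\in\overline R : x\overline R\subseteq R\} = t^{c_R}\overline R$, $c_R$ the conductor degree. The Herzog–Kunz sequence of $R$ is $v(\mathfrak m)\setminus v(\mathfrak m^2)$ listed increasingly as $a_1<\cdots<a_n$; Herzog–Kunz generators are $x_i \in R$ with $v(x_i)=a_i$ (these satisfy $R = k[[x_1,\ldots,x_n]]$). Fix Herzog–Kunz generators $x_1, \ldots, x_n$ with $x_1 = t^{a_1}$ and, for $i \ge 2$, $x_i = \alpha_i t^{a_i}$ with $\alpha_i \in k[[t]]$ a unit of constant term $1$. Define $o(\alpha_i) = v(\alpha_i - 1)$ (so $o(\alpha_i) = \infty$ if $\alpha_i = 1$). *)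

theory Defs
  imports "HOL-Computational_Algebra.Computational_Algebra" "HOL-Library.Extended_Nat"
begin

definition val_set :: "('a::field) fps set \<Rightarrow> nat set" where
  "val_set A = subdegree ` (A - {0})"

definition k_subalgebra :: "('a::field) fps set \<Rightarrow> bool" where
  "k_subalgebra R \<longleftrightarrow> (\<forall>c. fps_const c \<in> R) \<and>
     (\<forall>f\<in>R. \<forall>g\<in>R. f + g \<in> R \<and> f * g \<in> R \<and> - f \<in> R)"

definition conductor :: "('a::field) fps set \<Rightarrow> 'a fps set" where
  "conductor R = {x. \<forall>y. x * y \<in> R}"

text \<open>Conductor degree c_R, with C_R = t^(c_R) k[[t]].\<close>
definition conductor_degree :: "('a::field) fps set \<Rightarrow> nat" where
  "conductor_degree R = (LEAST c. fps_X ^ c \<in> conductor R)"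

text \<open>R \<subseteq> k[[t]] is a complete local noetherian one-dimensional domain containing k,
  with residue field k and normalization k[[t]] (finite birational): for a subring of
  k[[t]] containing k this amounts to the conductor being nonzero.\<close>
definition curve_ring :: "('a::field) fps set \<Rightarrow> bool" where
  "curve_ring R \<longleftrightarrow> k_subalgebra R \<and> conductor R \<noteq> {0}"

definition max_ideal :: "('a::field) fps set \<Rightarrow> 'a fps set" where
  "max_ideal R = {f \<in> R. fps_nth f 0 = 0}"

definition max_ideal_sq :: "('a::field) fps set \<Rightarrow> 'a fps set" where
  "max_ideal_sq R = {\<Sum>j<(N::nat). u j * w j | N u w.
      (\<forall>j<N. u j \<in> max_ideal R \<and> w j \<in> max_ideal R)}"

definition HK_set :: "('a::field) fps set \<Rightarrow> nat set" where
  "HK_set R = val_set (max_ideal R) - val_set (max_ideal_sq R)"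

definition HK_sequence :: "('a::field) fps set \<Rightarrow> nat \<Rightarrow> (nat \<Rightarrow> nat) \<Rightarrow> bool" where
  "HK_sequence R n a \<longleftrightarrow> strict_mono_on {1..n} a \<and> a ` {1..n} = HK_set R"

definition HK_generators ::
  "('a::field) fps set \<Rightarrow> nat \<Rightarrow> (nat \<Rightarrow> nat) \<Rightarrow> (nat \<Rightarrow> 'a fps) \<Rightarrow> bool" where
  "HK_generators R n a x \<longleftrightarrow> HK_sequence R n a \<and>
     (\<forall>j\<in>{1..n}. x j \<in> R \<and> x j \<noteq> 0 \<and> subdegree (x j) = a j)"

inductive_set poly_alg :: "('a::field) fps set \<Rightarrow> 'a fps set" for F where
  const: "fps_const c \<in> poly_alg F"
| gen: "f \<in> F \<Longrightarrow> f \<in> poly_alg F"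
| add: "p \<in> poly_alg F \<Longrightarrow> q \<in> poly_alg F \<Longrightarrow> p + q \<in> poly_alg F"
| mult: "p \<in> poly_alg F \<Longrightarrow> q \<in> poly_alg F \<Longrightarrow> p * q \<in> poly_alg F"

text \<open>k[[f_1,...,f_n]] for f_j \<in> t k[[t]]: the image of the substitution map
  k[[X_1..X_n]] \<rightarrow> k[[t]], i.e. the t-adic closure of k[f_1,...,f_n].\<close>
definition pseries_alg :: "('a::field) fps set \<Rightarrow> 'a fps set" where
  "pseries_alg F = {g. \<forall>N. \<exists>p\<in>poly_alg F. \<forall>m<N. fps_nth g m = fps_nth p m}"

definition ord_unit :: "('a::field) fps \<Rightarrow> enat" where
  "ord_unit \<alpha> = (if \<alpha> = 1 then \<infinity> else enat (subdegree (\<alpha> - 1)))"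

end

theory Submission
  imports Defs
begin

lemma ksub_basic:
  assumes "k_subalgebra R"
  shows "0 \<in> R" "1 \<in> R" "fps_const c \<in> R"
    "f \<in> R \<Longrightarrow> g \<in> R \<Longrightarrow> f + g \<in> R"
    "f \<in> R \<Longrightarrow> g \<in> R \<Longrightarrow> f * g \<in> R"
    "f \<in> R \<Longrightarrow> g \<in> R \<Longrightarrow> f - g \<in> R"
proof -
  show "fps_const c \<in> R" using assms unfolding k_subalgebra_def by blast
  then show "0 \<in> R" "1 \<in> R" using assms unfolding k_subalgebra_def
    by (metis fps_const_0_eq_0, metis fps_const_1_eq_1)
  show "f \<in> R \<Longrightarrow> g \<in> R \<Longrightarrow> f + g \<in> R" using assms unfolding k_subalgebra_def by blast
  show "f \<in> R \<Longrightarrow> g \<in> R \<Longrightarrow> f * g \<in> R" using assms unfolding k_subalgebra_def by blast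
  show "f \<in> R \<Longrightarrow> g \<in> R \<Longrightarrow> f - g \<in> R" using assms unfolding k_subalgebra_def
    by (metis diff_conv_add_uminus)
qed

lemma poly_alg_sub:
  assumes "k_subalgebra R" "F \<subseteq> R"
  shows "poly_alg F \<subseteq> R"
proof
  fix p assume "p \<in> poly_alg F"
  then show "p \<in> R"
    by (induction rule: poly_alg.induct) (use assms ksub_basic[OF assms(1)] in auto)
qed

lemma conductor_X:
  assumes "curve_ring R"
  shows "fps_X ^ conductor_degree R \<in> conductor R"
proof -
  have "0 \<in> R" using assms ksub_basic(1) unfolding curve_ring_def by blast
  then have "0 \<in> conductor R" unfolding conductor_def by simp
  with assms obtain x where x: "x \<in> conductor R" "x \<noteq> 0"
    unfolding curve_ring_def by blast
  define v where "v = subdegree x"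
  define u where "u = fps_shift v x"
  have u0: "u $ 0 \<noteq> 0" using x(2) unfolding u_def v_def by simp
  have xu: "x = u * fps_X ^ v" unfolding u_def v_def
    by (simp add: fps_shift_times_fps_X_power)
  have "fps_X ^ v \<in> conductor R"
    unfolding conductor_def
  proof (intro CollectI allI)
    fix y
    have "fps_X ^ v * y = x * (inverse u * y)"
      using inverse_mult_eq_1[OF u0] xu by (simp add: algebra_simps)
    also have "\<dots> \<in> R" using x(1) unfolding conductor_def by blast
    finally show "fps_X ^ v * y \<in> R" .
  qed
  then show ?thesis unfolding conductor_degree_def by (rule LeastI)
qed

lemma in_R_high:
  assumes "curve_ring R" "\<forall>m<conductor_degree R. f $ m = 0"
  shows "f \<in> R"
proof (cases "f = 0")
  case True
  then show ?thesis using assms(1) ksub_basic(1) unfolding curve_ring_def by blast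
next
  case False
  let ?c = "conductor_degree R"
  have "?c \<le> subdegree f"
    using assms(2) False by (meson not_less nth_subdegree_nonzero)
  then have "f = fps_X ^ ?c * fps_shift ?c f"
    by (simp add: fps_shift_times_fps_X_power mult.commute)
  also have "\<dots> \<in> R" using conductor_X[OF assms(1)] unfolding conductor_def by blast
  finally show ?thesis .
qed

lemma mult_nth_zero:
  fixes a b :: "'a::field fps"
  assumes "\<forall>m<A. a $ m = 0" "\<forall>m<B. b $ m = 0" "n < A + B"
  shows "(a * b) $ n = 0"
  unfolding fps_mult_nth
proof (rule sum.neutral, intro ballI)
  fix x assume "x \<in> {0..n}"
  show "a $ x * b $ (n - x) = 0"
  proof (cases "x < A")
    case True then show ?thesis using assms by simp
  next
    case False then have "n - x < B" using assms(3) \<open>x \<in> {0..n}\<close> by auto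
    then show ?thesis using assms by simp
  qed
qed


lemma poly_alg_zero: "(0::'a::field fps) \<in> poly_alg F"
  using poly_alg.const[of 0 F] by simp

definition apx :: "'a::field fps set \<Rightarrow> nat \<Rightarrow> 'a fps \<Rightarrow> bool" where
  "apx F N h \<longleftrightarrow> (\<exists>p\<in>poly_alg F. \<forall>m<N. h $ m = p $ m)"

lemma m2_apx:
  fixes u w :: "nat \<Rightarrow> 'a::field fps"
  assumes all: "\<forall>h\<in>R. apx F N h" and N: "1 \<le> N"
    and uw: "\<forall>j<M. u j \<in> max_ideal R \<and> w j \<in> max_ideal R"
  shows "apx F (Suc N) (\<Sum>j<M. u j * w j)"
  using uw
proof (induction M)
  case 0
  show ?case unfolding apx_def
    by (rule bexI[of _ 0]) (auto intro: poly_alg_zero)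
next
  case (Suc M)
  then obtain p where p: "p \<in> poly_alg F" "\<forall>m<Suc N. (\<Sum>j<M. u j * w j) $ m = p $ m"
    unfolding apx_def by auto
  have uM: "u M \<in> R" "u M $ 0 = 0" and wM: "w M \<in> R" "w M $ 0 = 0"
    using Suc.prems unfolding max_ideal_def by auto
  obtain pu where pu: "pu \<in> poly_alg F" "\<forall>m<N. u M $ m = pu $ m"
    using all uM unfolding apx_def by blast
  obtain pw where pw: "pw \<in> poly_alg F" "\<forall>m<N. w M $ m = pw $ m"
    using all wM unfolding apx_def by blast
  have pw0: "pw $ 0 = 0" using pw(2) N wM(2) by auto
  have eq: "u M * w M - pu * pw = u M * (w M - pw) + (u M - pu) * pw"
    by (simp add: algebra_simps)
  have "\<forall>m<Suc N. (u M * w M - pu * pw) $ m = 0"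
  proof (intro allI impI)
    fix m assume m: "m < Suc N"
    have z1: "(u M * (w M - pw)) $ m = 0"
      by (rule mult_nth_zero[where A=1 and B=N]) (use uM pw m in auto)
    have z2: "((u M - pu) * pw) $ m = 0"
      by (rule mult_nth_zero[where A=N and B=1]) (use pu pw0 m in auto)
    show "(u M * w M - pu * pw) $ m = 0" unfolding eq using z1 z2 by simp
  qed
  then have "\<forall>m<Suc N. (\<Sum>j<Suc M. u j * w j) $ m = (p + pu * pw) $ m"
    using p(2) by (auto simp: algebra_simps)
  moreover have "p + pu * pw \<in> poly_alg F"
    using p pu pw by (auto intro: poly_alg.add poly_alg.mult)
  ultimately show ?case unfolding apx_def by blast
qed

lemma main_apx:
  fixes R :: "'a::field fps set"
  assumes ks: "k_subalgebra R" and FR: "F \<subseteq> R"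
    and cover: "\<forall>v\<in>HK_set R. \<exists>f\<in>F. f \<noteq> 0 \<and> subdegree f = v"
  shows "h \<in> R \<Longrightarrow> apx F N h"
proof (induction N arbitrary: h)
  case 0
  show ?case unfolding apx_def
    by (rule bexI[of _ 0]) (auto intro: poly_alg_zero)
next
  case (Suc N)
  show ?case
  proof (cases "N = 0")
    case True
    show ?thesis unfolding apx_def True
      by (rule bexI[of _ "fps_const (h $ 0)"]) (auto intro: poly_alg.const)
  next
    case False
    then have N1: "1 \<le> N" by simp
    obtain p where p: "p \<in> poly_alg F" "\<forall>m<N. h $ m = p $ m"
      using Suc.IH[OF Suc.prems] unfolding apx_def by blast
    have pR: "p \<in> R" using poly_alg_sub[OF ks FR] p(1) by blast
    define g where "g = h - p"
    have gR: "g \<in> R" unfolding g_def using ksub_basic(6)[OF ks Suc.prems pR] .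
    have gz: "\<forall>m<N. g $ m = 0" using p(2) unfolding g_def by simp
    show ?thesis
    proof (cases "g $ N = 0")
      case True
      then have "\<forall>m<Suc N. h $ m = p $ m" using p(2) unfolding g_def
        by (metis diff_eq_eq fps_sub_nth less_Suc_eq add_0)
      then show ?thesis unfolding apx_def using p(1) by blast
    next
      case gN: False
      have g0: "g $ 0 = 0" using gz N1 by auto
      have gm: "g \<in> max_ideal R" unfolding max_ideal_def using gR g0 by simp
      have gnz: "g \<noteq> 0" using gN by auto
      have sg: "subdegree g = N" by (rule subdegreeI) (use gN gz in auto)
      have Nv: "N \<in> val_set (max_ideal R)" unfolding val_set_def
        using gm gnz sg by force
      show ?thesis
      proof (cases "N \<in> HK_set R")
        case True
        then obtain f where f: "f \<in> F" "f \<noteq> 0" "subdegree f = N" using cover by blast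
        define c where "c = g $ N / f $ N"
        have fN: "f $ N \<noteq> 0" using f by auto
        have "\<forall>m<Suc N. h $ m = (p + fps_const c * f) $ m"
        proof (intro allI impI)
          fix m assume m: "m < Suc N"
          show "h $ m = (p + fps_const c * f) $ m"
          proof (cases "m < N")
            case True
            then show ?thesis using p(2) f(3) by auto
          next
            case False
            then have "m = N" using m by simp
            then show ?thesis using fN unfolding c_def g_def by (simp add: field_simps)
          qed
        qed
        moreover have "p + fps_const c * f \<in> poly_alg F"
          using p(1) f(1) by (auto intro: poly_alg.add poly_alg.mult poly_alg.const poly_alg.gen)
        ultimately show ?thesis unfolding apx_def by blast
      next
        case False
        then have "N \<in> val_set (max_ideal_sq R)" using Nv unfolding HK_set_def by blast
        then obtain s0 where s0: "s0 \<in> max_ideal_sq R" "s0 \<noteq> 0" "subdegree s0 = N"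
          unfolding val_set_def by blast
        obtain M :: nat and u w where s0e: "s0 = (\<Sum>j<M. u j * w j)"
          and uw: "\<forall>j<M. u j \<in> max_ideal R \<and> w j \<in> max_ideal R"
          using s0(1) unfolding max_ideal_sq_def by blast
        have allN: "\<forall>h\<in>R. apx F N h" using Suc.IH by blast
        obtain q where q: "q \<in> poly_alg F" "\<forall>m<Suc N. s0 $ m = q $ m"
          using m2_apx[OF allN N1 uw] s0e unfolding apx_def by blast
        define c where "c = g $ N / s0 $ N"
        have sN: "s0 $ N \<noteq> 0" using s0 by auto
        have "\<forall>m<Suc N. h $ m = (p + fps_const c * q) $ m"
        proof (intro allI impI)
          fix m assume m: "m < Suc N"
          show "h $ m = (p + fps_const c * q) $ m"
          proof (cases "m < N")
            case True
            then have "q $ m = 0" using q(2) s0(3) by (metis less_SucI nth_less_subdegree_zero)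
            then show ?thesis using p(2) True by auto
          next
            case False
            then have "m = N" using m by simp
            then show ?thesis using sN q(2) unfolding c_def g_def by (simp add: field_simps)
          qed
        qed
        moreover have "p + fps_const c * q \<in> poly_alg F"
          using p(1) q(1) by (auto intro: poly_alg.add poly_alg.mult poly_alg.const)
        ultimately show ?thesis unfolding apx_def by blast
      qed
    qed
  qed
qed

lemma R_eq_pseries:
  fixes R :: "'a::field fps set"
  assumes R: "curve_ring R" and FR: "F \<subseteq> R"
    and cover: "\<forall>v\<in>HK_set R. \<exists>f\<in>F. f \<noteq> 0 \<and> subdegree f = v"
  shows "R = pseries_alg F"
proof
  have ks: "k_subalgebra R" using R unfolding curve_ring_def by blast
  show "R \<subseteq> pseries_alg F"
    using main_apx[OF ks FR cover] unfolding pseries_alg_def apx_def by blast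
  show "pseries_alg F \<subseteq> R"
  proof
    fix g assume "g \<in> pseries_alg F"
    then obtain p where p: "p \<in> poly_alg F" "\<forall>m<conductor_degree R. g $ m = p $ m"
      unfolding pseries_alg_def by blast
    have pR: "p \<in> R" using poly_alg_sub[OF ks FR] p(1) by blast
    have "g - p \<in> R" by (rule in_R_high[OF R]) (use p(2) in simp)
    then have "(g - p) + p \<in> R" using ksub_basic(4)[OF ks] pR by blast
    then show "g \<in> R" by simp
  qed
qed


theorem mainTheorem10:
  fixes R :: "('k::{alg_closed_field, field_char_0}) fps set"
    and n :: nat and a :: "nat \<Rightarrow> nat" and x \<alpha> :: "nat \<Rightarrow> 'k fps"
    and i d :: nat
  assumes R: "curve_ring R"
    and HK: "HK_generators R n a x"
    and x1: "x 1 = fps_X ^ a 1"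
    and xi: "\<forall>j\<in>{2..n}. x j = \<alpha> j * fps_X ^ a j \<and> fps_nth (\<alpha> j) 0 = 1"
    and id: "2 \<le> i" "i \<le> d" "d \<le> n"
    and ocond: "ord_unit (\<alpha> d) + enat (a i) \<ge> enat (conductor_degree R)"
    and ofin: "ord_unit (\<alpha> d) < \<infinity>"
  shows "R = pseries_alg ((x(d := fps_X ^ a d)) ` {1..n})
     \<and> HK_generators R n a (x(d := fps_X ^ a d))"
proof -
  define y where "y = x(d := fps_X ^ a d)"
  have ks: "k_subalgebra R" using R unfolding curve_ring_def by blast
  have sm: "strict_mono_on {1..n} a" and aim: "a ` {1..n} = HK_set R"
    using HK unfolding HK_generators_def HK_sequence_def by auto
  have xR: "\<forall>j\<in>{1..n}. x j \<in> R \<and> x j \<noteq> 0 \<and> subdegree (x j) = a j"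
    using HK unfolding HK_generators_def by blast
  have xd: "x d = \<alpha> d * fps_X ^ a d" using xi id by auto
  have a1: "\<alpha> d \<noteq> 1" using ofin unfolding ord_unit_def by auto
  have cle: "conductor_degree R \<le> subdegree (\<alpha> d - 1) + a i"
    using ocond a1 unfolding ord_unit_def by simp
  have aid: "a i \<le> a d"
  proof (cases "i = d")
    case False
    then have "a i < a d" using strict_mono_onD[OF sm, of i d] id by auto
    then show ?thesis by simp
  qed simp
  have diffe: "x d - fps_X ^ a d = (\<alpha> d - 1) * fps_X ^ a d"
    unfolding xd by (simp add: algebra_simps)
  have "x d - fps_X ^ a d \<in> R"
  proof (rule in_R_high[OF R], intro allI impI)
    fix m assume m: "m < conductor_degree R"
    show "(x d - fps_X ^ a d) $ m = 0"
    proof (cases "m < a d")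
      case True
      then show ?thesis unfolding diffe fps_X_power_mult_right_nth by simp
    next
      case False
      then have "m - a d < subdegree (\<alpha> d - 1)" using m cle aid by linarith
      then have "(\<alpha> d - 1) $ (m - a d) = 0" by (rule nth_less_subdegree_zero)
      then show ?thesis unfolding diffe fps_X_power_mult_right_nth using False by simp
    qed
  qed
  moreover have "x d \<in> R" using xR id by auto
  ultimately have "x d - (x d - fps_X ^ a d) \<in> R" using ksub_basic(6)[OF ks] by blast
  then have XR: "fps_X ^ a d \<in> R" by simp
  have yR: "\<forall>j\<in>{1..n}. y j \<in> R \<and> y j \<noteq> 0 \<and> subdegree (y j) = a j"
    using xR XR unfolding y_def by auto
  have HKy: "HK_generators R n a y"
    using HK yR unfolding HK_generators_def by blast
  have FR: "y ` {1..n} \<subseteq> R" using yR by blast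
  have cover: "\<forall>v\<in>HK_set R. \<exists>f\<in>y ` {1..n}. f \<noteq> 0 \<and> subdegree f = v"
  proof
    fix v assume "v \<in> HK_set R"
    then obtain j where j: "j \<in> {1..n}" "v = a j" using aim by (metis imageE)
    then show "\<exists>f\<in>y ` {1..n}. f \<noteq> 0 \<and> subdegree f = v" using yR by blast
  qed
  show ?thesis using R_eq_pseries[OF R FR cover] HKy unfolding y_def by blast
qed

end
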